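(* Let $H$ and $X$ be Hilbert spaces with inner products $(\cdot,\cdot)$, let $X^*$ be the dual space of $X$, and let $\langle\cdot,\cdot\rangle$ denote the sesquilinear duality pairing of $X^*$ and $X$. Assume $F:H\to H$ is a linear compact normal operator satisfying $F=GM^*G^*$, where $G:X\to H$ and $M:X^*\to X$ are bounded linear operators and $G^*:H\to X^*$ is defined by $\langle G^*g,\varphi\rangle=(g,G\varphi)$ for all $\varphi\in X$, $g\in H$. Assume further that $G^*$ has a finite dimensional null space and that $M=M_0+C$ for some compact operator $C$ and some self-adjoint operator $M_0$ which is coercive on $G^*(H)$, i.e. there exists $c_0>0$ with $\langle\phi,M_0\phi\rangle\ge c_0\|\phi\|^2$ for all $\phi\in G^*(H)$. Then $F$ has at most a finite number of eigenvalues whose real parts are negative. *)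

theory Defs
  imports "HOL-Analysis.Analysis"
begin

text \<open>The library only provides real inner product spaces, so complex vector spaces,
complex inner product spaces and complex Hilbert spaces are introduced here as type classes.\<close>

class complex_vector = real_vector +
  fixes scaleC :: "complex \<Rightarrow> 'a \<Rightarrow> 'a"
  assumes scaleC_add_right: "scaleC a (x + y) = scaleC a x + scaleC a y"
    and scaleC_add_left: "scaleC (a + b) x = scaleC a x + scaleC b x"
    and scaleC_scaleC: "scaleC a (scaleC b x) = scaleC (a * b) x"
    and scaleC_one: "scaleC 1 x = x"
    and scaleR_scaleC: "scaleR r x = scaleC (complex_of_real r) x"

class complex_inner = complex_vector + real_normed_vector +
  fixes cinner :: "'a \<Rightarrow> 'a \<Rightarrow> complex"
  assumes cinner_commute: "cinner x y = cnj (cinner y x)"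
    and cinner_add_left: "cinner (x + y) z = cinner x z + cinner y z"
    and cinner_scaleC_left: "cinner (scaleC r x) y = r * cinner x y"
    and cinner_ge_zero: "0 \<le> Re (cinner x x)"
    and cinner_eq_zero_iff: "cinner x x = 0 \<longleftrightarrow> x = 0"
    and norm_eq_sqrt_cinner: "norm x = sqrt (Re (cinner x x))"

class chilbert_space = complex_inner + complete_space

definition clinear :: "('a::complex_vector \<Rightarrow> 'b::complex_vector) \<Rightarrow> bool" where
  "clinear f \<longleftrightarrow> (\<forall>x y. f (x + y) = f x + f y) \<and> (\<forall>c x. f (scaleC c x) = scaleC c (f x))"

definition bounded_clinear :: "('a::complex_inner \<Rightarrow> 'b::complex_inner) \<Rightarrow> bool" where
  "bounded_clinear f \<longleftrightarrow> clinear f \<and> (\<exists>K. \<forall>x. norm (f x) \<le> K * norm x)"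

definition compact_op :: "('a::complex_inner \<Rightarrow> 'b::complex_inner) \<Rightarrow> bool" where
  "compact_op f \<longleftrightarrow> clinear f \<and> (\<forall>S. bounded S \<longrightarrow> compact (closure (f ` S)))"

definition normal_op :: "('a::complex_inner \<Rightarrow> 'a) \<Rightarrow> bool" where
  "normal_op F \<longleftrightarrow> (\<exists>Fa. (\<forall>x y. cinner (F x) y = cinner x (Fa y)) \<and> F \<circ> Fa = Fa \<circ> F)"

definition eigenvalue :: "('a::complex_vector \<Rightarrow> 'a) \<Rightarrow> complex \<Rightarrow> bool" where
  "eigenvalue F l \<longleftrightarrow> (\<exists>x. x \<noteq> 0 \<and> F x = scaleC l x)"

definition cspan :: "'a::complex_vector set \<Rightarrow> 'a set" where
  "cspan B = {\<Sum>b\<in>T. scaleC (c b) b | T c. finite T \<and> T \<subseteq> B}"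

definition finite_dim_subspace :: "'a::complex_vector set \<Rightarrow> bool" where
  "finite_dim_subspace N \<longleftrightarrow> (\<exists>B. finite B \<and> N \<subseteq> cspan B)"

text \<open>X* is the space of bounded antilinear functionals on X; the pairing is
  \<open>\<langle>f, \<phi>\<rangle> = f \<phi>\<close>, linear in f and antilinear in \<phi>.\<close>

definition dual_space :: "('x::complex_inner \<Rightarrow> complex) set" where
  "dual_space = {f. (\<forall>x y. f (x + y) = f x + f y) \<and> (\<forall>c x. f (scaleC c x) = cnj c * f x)
                    \<and> (\<exists>K. \<forall>x. cmod (f x) \<le> K * norm x)}"

definition dual_norm :: "('x::complex_inner \<Rightarrow> complex) \<Rightarrow> real" where
  "dual_norm f = Sup {cmod (f x) | x. norm x \<le> 1}"

definition clinear_on_dual :: "(('x::complex_inner \<Rightarrow> complex) \<Rightarrow> 'y::complex_vector) \<Rightarrow> bool" where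
  "clinear_on_dual M \<longleftrightarrow>
     (\<forall>f\<in>dual_space. \<forall>g\<in>dual_space. M (\<lambda>x. f x + g x) = M f + M g) \<and>
     (\<forall>f\<in>dual_space. \<forall>c. M (\<lambda>x. c * f x) = scaleC c (M f))"

definition bounded_on_dual :: "(('x::complex_inner \<Rightarrow> complex) \<Rightarrow> 'y::complex_inner) \<Rightarrow> bool" where
  "bounded_on_dual M \<longleftrightarrow> (\<exists>K. \<forall>f\<in>dual_space. norm (M f) \<le> K * dual_norm f)"

definition compact_on_dual :: "(('x::complex_inner \<Rightarrow> complex) \<Rightarrow> 'y::complex_inner) \<Rightarrow> bool" where
  "compact_on_dual C \<longleftrightarrow> clinear_on_dual C \<and>
     (\<forall>S\<subseteq>dual_space. (\<exists>B. \<forall>f\<in>S. dual_norm f \<le> B) \<longrightarrow> compact (closure (C ` S)))"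

text \<open>Adjoint of M : X* \<rightarrow> X is the operator M* : X* \<rightarrow> X (using X** = X) with
  \<open>\<langle>\<phi>, M* \<psi>\<rangle> = conj \<langle>\<psi>, M \<phi>\<rangle>\<close>.\<close>
definition is_dual_adjoint :: "(('x::complex_inner \<Rightarrow> complex) \<Rightarrow> 'x) \<Rightarrow> (('x \<Rightarrow> complex) \<Rightarrow> 'x) \<Rightarrow> bool" where
  "is_dual_adjoint Ms M \<longleftrightarrow> (\<forall>\<phi>\<in>dual_space. \<forall>\<psi>\<in>dual_space. \<phi> (Ms \<psi>) = cnj (\<psi> (M \<phi>)))"

definition selfadjoint_on_dual :: "(('x::complex_inner \<Rightarrow> complex) \<Rightarrow> 'x) \<Rightarrow> bool" where
  "selfadjoint_on_dual M \<longleftrightarrow> is_dual_adjoint M M"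

definition dual_adj :: "('x::complex_inner \<Rightarrow> 'h::complex_inner) \<Rightarrow> 'h \<Rightarrow> ('x \<Rightarrow> complex)" where
  "dual_adj G g = (\<lambda>\<phi>. cinner g (G \<phi>))"

end

theory Submission
  imports Defs
begin

lemma scaleC_real: "scaleC (complex_of_real r) (x::'a::complex_vector) = scaleR r x"
  by (simp add: scaleR_scaleC)

lemma scaleC_zero_left[simp]: "scaleC 0 (x::'a::complex_vector) = 0"
  using scaleC_real[of 0 x] by simp

lemma scaleC_zero_right[simp]: "scaleC c (0::'a::complex_vector) = 0"
proof -
  have "scaleC c (0::'a) = scaleC c 0 + scaleC c 0" using scaleC_add_right[of c 0 0] by simp
  thus ?thesis by simp
qed

lemma scaleC_minus1: "scaleC (-1) (x::'a::complex_vector) = - x"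
  using scaleC_real[of "-1" x] by simp

lemma scaleC_diff_right: "scaleC c ((x::'a::complex_vector) - y) = scaleC c x - scaleC c y"
  using scaleC_add_right[of c "x - y" y] by (simp add: eq_diff_eq)

lemma scaleC_diff_left: "scaleC (a - b) (x::'a::complex_vector) = scaleC a x - scaleC b x"
  using scaleC_add_left[of "a - b" b x] by (simp add: eq_diff_eq)

lemma cinner_zero_left[simp]: "cinner 0 (x::'a::complex_inner) = 0"
  using cinner_add_left[of 0 0 x] by simp

lemma cinner_zero_right[simp]: "cinner (x::'a::complex_inner) 0 = 0"
  by (metis cinner_commute cinner_zero_left complex_cnj_zero)

lemma cinner_add_right: "cinner (x::'a::complex_inner) (y + z) = cinner x y + cinner x z"
proof -
  have "cinner x (y + z) = cnj (cinner (y+z) x)" by (rule cinner_commute)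
  also have "\<dots> = cnj (cinner y x) + cnj (cinner z x)" by (simp add: cinner_add_left)
  also have "\<dots> = cinner x y + cinner x z" by (metis cinner_commute)
  finally show ?thesis .
qed

lemma cinner_scaleC_right: "cinner (x::'a::complex_inner) (scaleC c y) = cnj c * cinner x y"
proof -
  have "cinner x (scaleC c y) = cnj (cinner (scaleC c y) x)" by (rule cinner_commute)
  also have "\<dots> = cnj c * cnj (cinner y x)" by (simp add: cinner_scaleC_left)
  also have "\<dots> = cnj c * cinner x y" by (metis cinner_commute)
  finally show ?thesis .
qed

lemma cinner_diff_left: "cinner ((x::'a::complex_inner) - y) z = cinner x z - cinner y z"
  using cinner_add_left[of "x - y" y z] by (simp add: eq_diff_eq)

lemma cinner_diff_right: "cinner (x::'a::complex_inner) (y - z) = cinner x y - cinner x z"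
  using cinner_add_right[of x "y - z" z] by (simp add: eq_diff_eq)

lemma cinner_minus_right: "cinner (x::'a::complex_inner) (- y) = - cinner x y"
  using cinner_diff_right[of x 0 y] by simp

lemma cinner_self: "cinner (x::'a::complex_inner) x = complex_of_real ((norm x)^2)"
proof -
  have "Im (cinner x x) = - Im (cinner x x)"
    using arg_cong[OF cinner_commute[of x x], of Im] by simp
  hence "Im (cinner x x) = 0" by simp
  moreover have "Re (cinner x x) = (norm x)^2" using norm_eq_sqrt_cinner[of x] cinner_ge_zero[of x] by simp
  ultimately show ?thesis by (simp add: complex_eq_iff)
qed

lemma pythag: assumes "cinner (x::'a::complex_inner) y = 0"
  shows "(norm (x + y))^2 = (norm x)^2 + (norm y)^2"
proof -
  have "cinner y x = 0" using assms by (metis cinner_commute complex_cnj_zero)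
  hence "cinner (x+y) (x+y) = cinner x x + cinner y y"
    using assms by (simp add: cinner_add_left cinner_add_right)
  hence "complex_of_real ((norm (x + y))^2) = complex_of_real ((norm x)^2 + (norm y)^2)"
    by (simp only: cinner_self of_real_add)
  thus ?thesis by (simp only: of_real_eq_iff)
qed

lemma cinner_ext: assumes "\<And>z. cinner z a = cinner z (b::'a::complex_inner)" shows "a = b"
proof -
  have "cinner (a - b) (a - b) = 0" using assms[of "a-b"] by (simp add: cinner_diff_right)
  thus ?thesis using cinner_eq_zero_iff[of "a-b"] by simp
qed

lemma norm_scaleC: "norm (scaleC c (x::'a::complex_inner)) = cmod c * norm x"
proof -
  have "cinner (scaleC c x) (scaleC c x) = (c * cnj c) * cinner x x"
    by (simp add: cinner_scaleC_left cinner_scaleC_right)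
  also have "c * cnj c = complex_of_real ((cmod c)^2)" by (metis complex_norm_square)
  finally have "complex_of_real ((norm (scaleC c x))^2) = complex_of_real ((cmod c * norm x)^2)"
    by (simp only: cinner_self of_real_mult power_mult_distrib)
  hence "(norm (scaleC c x))^2 = (cmod c * norm x)^2" by (simp only: of_real_eq_iff)
  thus ?thesis by (simp add: power2_eq_iff_nonneg)
qed

lemma cauchy_schwarz: "cmod (cinner (x::'a::complex_inner) y) \<le> norm x * norm y"
proof (cases "y = 0")
  case True then show ?thesis by simp
next
  case False
  hence ny: "norm y > 0" by simp
  define t where "t = cinner x y / cinner y y"
  have yy: "cinner y y = complex_of_real ((norm y)^2)" by (rule cinner_self)
  have yy0: "cinner y y \<noteq> 0" using False cinner_eq_zero_iff by blast
  define w where "w = x - scaleC t y"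
  have wy: "cinner w y = 0" unfolding w_def t_def using yy0
    by (simp add: cinner_diff_left cinner_scaleC_left)
  have "cinner w (scaleC t y) = 0" using wy by (simp add: cinner_scaleC_right)
  hence "(norm x)^2 = (norm w)^2 + (norm (scaleC t y))^2"
    using pythag[of w "scaleC t y"] unfolding w_def by simp
  hence "(norm (scaleC t y))^2 \<le> (norm x)^2" by simp
  hence "(cmod t * norm y)^2 \<le> (norm x)^2" by (simp only: norm_scaleC)
  hence le: "cmod t * norm y \<le> norm x" by (rule power2_le_imp_le) simp
  have "cmod t = cmod (cinner x y) / (norm y)^2"
    unfolding t_def yy by (simp add: norm_divide norm_power)
  with le ny show ?thesis by (simp add: field_simps power2_eq_square)
qed

lemma cinner_sum_left: "cinner (\<Sum>i\<in>A. f i) (z::'a::complex_inner) = (\<Sum>i\<in>A. cinner (f i) z)"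
  by (induction A rule: infinite_finite_induct) (simp_all add: cinner_add_left)

lemma cinner_sum_right: "cinner (z::'a::complex_inner) (\<Sum>i\<in>A. f i) = (\<Sum>i\<in>A. cinner z (f i))"
  by (induction A rule: infinite_finite_induct) (simp_all add: cinner_add_right)

lemma lin_sum:
  assumes add: "\<And>x y. f (x+y) = f x + f y" and hom: "\<And>c x. f (scaleC c x) = scaleC c (f x)"
  shows "f (\<Sum>i\<in>A. scaleC (a i) (v i)) = (\<Sum>i\<in>A. scaleC (a i) ((f (v i))::'b::complex_vector))"
proof -
  have f0: "f (0::'a::complex_vector) = 0" using hom[of 0 0] by simp
  show ?thesis
    by (induction A rule: infinite_finite_induct) (simp_all add: f0 add hom)
qed

lemma lin_sum_c:
  assumes add: "\<And>x y. f (x+y) = f x + f y" and hom: "\<And>c x. f (scaleC c x) = c * (f x :: complex)"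
  shows "f (\<Sum>i\<in>A. scaleC (a i) ((v i)::'a::complex_vector)) = (\<Sum>i\<in>A. a i * f (v i))"
proof -
  have f0: "f (0::'a::complex_vector) = 0" using hom[of 0 0] by simp
  show ?thesis
    by (induction A rule: infinite_finite_induct) (simp_all add: f0 add hom)
qed

lemma adj_hom:
  assumes adj: "\<forall>x y. cinner (F x) y = cinner x (Fa y)"
  shows "Fa (scaleC c x) = scaleC c (Fa (x::'a::complex_inner))"
proof (rule cinner_ext)
  fix z
  have "cinner z (Fa (scaleC c x)) = cinner (F z) (scaleC c x)" using adj by simp
  also have "\<dots> = cnj c * cinner (F z) x" by (simp add: cinner_scaleC_right)
  also have "\<dots> = cnj c * cinner z (Fa x)" using adj by simp
  also have "\<dots> = cinner z (scaleC c (Fa x))" by (simp add: cinner_scaleC_right)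
  finally show "cinner z (Fa (scaleC c x)) = cinner z (scaleC c (Fa x))" .
qed

lemma normal_eigen_adj:
  assumes adj: "\<forall>x y. cinner (F x) y = cinner x (Fa y)" and comm: "F \<circ> Fa = Fa \<circ> F"
    and Fv: "F v = scaleC l (v::'a::complex_inner)"
  shows "Fa v = scaleC (cnj l) v"
proof -
  define w where "w = Fa v - scaleC (cnj l) v"
  have "cinner v (Fa v) = l * cinner v v"
    using adj Fv by (metis cinner_scaleC_left)
  hence vw: "cinner v w = 0" unfolding w_def by (simp add: cinner_diff_right cinner_scaleC_right)
  have "cinner (Fa v) (Fa v) = cinner (F (Fa v)) v" using adj by simp
  also have "F (Fa v) = Fa (F v)" using comm by (metis comp_apply)
  also have "\<dots> = scaleC l (Fa v)" using Fv adj_hom[OF adj] by simp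
  finally have "cinner (Fa v) (Fa v) = l * cinner (Fa v) v" by (simp add: cinner_scaleC_left)
  hence "cinner (Fa v) w = 0" unfolding w_def by (simp add: cinner_diff_right cinner_scaleC_right)
  hence "cinner w w = 0" using vw unfolding w_def[symmetric]
    by (simp add: w_def cinner_diff_left cinner_scaleC_left)
  thus ?thesis using cinner_eq_zero_iff[of w] unfolding w_def by simp
qed

lemma normal_orth:
  assumes adj: "\<forall>x y. cinner (F x) y = cinner x (Fa y)" and comm: "F \<circ> Fa = Fa \<circ> F"
    and Fv: "F v = scaleC l (v::'a::complex_inner)" and Fw: "F w = scaleC m w" and lm: "l \<noteq> m"
  shows "cinner v w = 0"
proof -
  have "l * cinner v w = cinner (F v) w" using Fv by (simp add: cinner_scaleC_left)
  also have "\<dots> = cinner v (Fa w)" using adj by simp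
  also have "\<dots> = m * cinner v w" using normal_eigen_adj[OF adj comm Fw] by (simp add: cinner_scaleC_right)
  finally have "(l - m) * cinner v w = 0" by (simp add: algebra_simps)
  thus ?thesis using lm by simp
qed

lemma cinner_orth_sum:
  assumes orth: "\<forall>i\<in>A. \<forall>j\<in>A. i \<noteq> j \<longrightarrow> cinner (v i) (v j) = 0" and fin: "finite A"
  shows "cinner (\<Sum>i\<in>A. scaleC (b i) (v i)) (\<Sum>j\<in>A. scaleC (a j) ((v j)::'a::complex_inner))
       = (\<Sum>i\<in>A. b i * cnj (a i) * cinner (v i) (v i))"
proof -
  have "cinner (\<Sum>i\<in>A. scaleC (b i) (v i)) (\<Sum>j\<in>A. scaleC (a j) (v j))
      = (\<Sum>i\<in>A. b i * (\<Sum>j\<in>A. cnj (a j) * cinner (v i) (v j)))"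
    unfolding cinner_sum_left
    by (intro sum.cong refl) (simp add: cinner_sum_right cinner_scaleC_left cinner_scaleC_right sum_distrib_left mult.left_commute)
  also have "\<dots> = (\<Sum>i\<in>A. b i * cnj (a i) * cinner (v i) (v i))"
  proof (rule sum.cong[OF refl])
    fix i assume i: "i \<in> A"
    have "(\<Sum>j\<in>A. cnj (a j) * cinner (v i) (v j)) = (\<Sum>j\<in>A. if j = i then cnj (a i) * cinner (v i) (v i) else 0)"
      using orth i by (intro sum.cong) auto
    also have "\<dots> = cnj (a i) * cinner (v i) (v i)" using fin i by simp
    finally show "b i * (\<Sum>j\<in>A. cnj (a j) * cinner (v i) (v j)) = b i * cnj (a i) * cinner (v i) (v i)" by simp
  qed
  finally show ?thesis .
qed

lemma dual_zero: assumes "f \<in> dual_space" shows "f 0 = 0"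
proof -
  have "f (0 + 0) = f 0 + f 0" using assms unfolding dual_space_def by blast
  thus ?thesis by simp
qed

lemma dual_bdd: assumes "(f::'x::complex_inner \<Rightarrow> complex) \<in> dual_space"
  shows "bdd_above {cmod (f x) | x. norm x \<le> 1}"
proof -
  obtain K where K: "\<forall>x. cmod (f x) \<le> K * norm x" using assms unfolding dual_space_def by blast
  have "cmod (f x) \<le> max K 0" if "norm x \<le> 1" for x
  proof -
    have "cmod (f x) \<le> K * norm x" using K by blast
    also have "\<dots> \<le> max K 0 * norm x" by (simp add: mult_right_mono)
    also have "\<dots> \<le> max K 0" using that by (simp add: mult_left_le)
    finally show ?thesis .
  qed
  thus ?thesis unfolding bdd_above_def by blast
qed

lemma dual_norm_ge0: assumes "(f::'x::complex_inner \<Rightarrow> complex) \<in> dual_space"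
  shows "0 \<le> dual_norm f"
proof -
  have "cmod (f 0) \<in> {cmod (f x) | x. norm x \<le> 1}" by force
  hence "cmod (f 0) \<le> dual_norm f" unfolding dual_norm_def by (rule cSup_upper) (rule dual_bdd[OF assms])
  thus ?thesis by (simp add: dual_zero[OF assms])
qed

lemma dual_norm_le: assumes "(f::'x::complex_inner \<Rightarrow> complex) \<in> dual_space"
  and "\<And>x. norm x \<le> 1 \<Longrightarrow> cmod (f x) \<le> B"
  shows "dual_norm f \<le> B"
  unfolding dual_norm_def
proof (rule cSup_least)
  have "cmod (f 0) \<in> {cmod (f x) |x. norm x \<le> 1}" by force
  thus "{cmod (f x) |x. norm x \<le> 1} \<noteq> {}" by blast
  show "\<And>y. y \<in> {cmod (f x) |x. norm x \<le> 1} \<Longrightarrow> y \<le> B" using assms(2) by blast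
qed

lemma dual_bound: assumes "(f::'x::complex_inner \<Rightarrow> complex) \<in> dual_space"
  shows "cmod (f x) \<le> dual_norm f * norm x"
proof (cases "x = 0")
  case True then show ?thesis by (simp add: dual_zero[OF assms])
next
  case False
  hence nx: "norm x > 0" by simp
  define x' where "x' = scaleR (1 / norm x) x"
  have x'C: "x' = scaleC (complex_of_real (1 / norm x)) x" unfolding x'_def by (rule scaleR_scaleC)
  have "norm x' = 1" using nx unfolding x'_def by simp
  hence "cmod (f x') \<in> {cmod (f x) | x. norm x \<le> 1}" by force
  hence le: "cmod (f x') \<le> dual_norm f" unfolding dual_norm_def by (rule cSup_upper) (rule dual_bdd[OF assms])
  have "f x' = cnj (complex_of_real (1 / norm x)) * f x" using assms unfolding dual_space_def x'C by blast
  hence "cmod (f x') = cmod (f x) / norm x" by (simp add: norm_divide)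
  with le nx show ?thesis by (simp add: field_simps)
qed

lemma dual_scale: assumes "(f::'x::complex_inner \<Rightarrow> complex) \<in> dual_space"
  shows "(\<lambda>x. c * f x) \<in> dual_space"
proof -
  obtain K where K: "\<forall>x. cmod (f x) \<le> K * norm x" using assms unfolding dual_space_def by blast
  have "\<forall>x. cmod (c * f x) \<le> (cmod c * K) * norm x"
    using K by (simp add: norm_mult mult.assoc mult_left_mono)
  moreover have "\<forall>x y. c * f (x + y) = c * f x + c * f y" using assms unfolding dual_space_def by (simp add: algebra_simps)
  moreover have "\<forall>d x. c * f (scaleC d x) = cnj d * (c * f x)" using assms unfolding dual_space_def by (simp add: algebra_simps)
  ultimately show ?thesis unfolding dual_space_def by blast
qed

lemma clinearD:
  assumes "clinear G" shows "G (x + y) = G x + G y" "G (scaleC c x) = scaleC c (G x)"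
  using assms unfolding clinear_def by blast+

lemma dual_adj_in: assumes "bounded_clinear (G::'x::complex_inner \<Rightarrow> 'h::complex_inner)"
  shows "dual_adj G g \<in> dual_space"
proof -
  have lin: "clinear G" and "\<exists>K. \<forall>x. norm (G x) \<le> K * norm x" using assms unfolding bounded_clinear_def by blast+
  then obtain K where K: "\<forall>x. norm (G x) \<le> K * norm x" by blast
  have "\<forall>x. cmod (dual_adj G g x) \<le> (norm g * K) * norm x"
  proof
    fix x
    have "cmod (dual_adj G g x) \<le> norm g * norm (G x)" unfolding dual_adj_def by (rule cauchy_schwarz)
    also have "\<dots> \<le> norm g * (K * norm x)" using K by (simp add: mult_left_mono)
    finally show "cmod (dual_adj G g x) \<le> (norm g * K) * norm x" by (simp add: mult.assoc)
  qed
  moreover have "\<forall>x y. dual_adj G g (x + y) = dual_adj G g x + dual_adj G g y"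
    unfolding dual_adj_def by (simp add: clinearD[OF lin] cinner_add_right)
  moreover have "\<forall>c x. dual_adj G g (scaleC c x) = cnj c * dual_adj G g x"
    unfolding dual_adj_def by (simp add: clinearD[OF lin] cinner_scaleC_right)
  ultimately show ?thesis unfolding dual_space_def by blast
qed

lemma dual_adj_add: "dual_adj G (g1 + g2) = (\<lambda>x. dual_adj G g1 x + dual_adj G g2 x)"
  unfolding dual_adj_def by (simp add: cinner_add_left)

lemma dual_adj_scale: "dual_adj G (scaleC c g) = (\<lambda>x. c * dual_adj G g x)"
  unfolding dual_adj_def by (simp add: cinner_scaleC_left)

lemma homog_system:
  fixes E :: "(nat \<Rightarrow> complex) set"
  assumes "finite E" "card E < N"
  shows "\<exists>a. (\<exists>i<N. a i \<noteq> 0) \<and> (\<forall>e\<in>E. (\<Sum>i<N. e i * a i) = 0)"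
  using assms
proof (induction N arbitrary: E)
  case 0 then show ?case by simp
next
  case (Suc n)
  show ?case
  proof (cases "\<exists>e0\<in>E. e0 n \<noteq> 0")
    case False
    define a :: "nat \<Rightarrow> complex" where "a = (\<lambda>i. if i = n then 1 else 0)"
    have "\<forall>e\<in>E. (\<Sum>i<Suc n. e i * a i) = 0"
      using False by (simp add: a_def)
    moreover have "a n \<noteq> 0" by (simp add: a_def)
    ultimately show ?thesis by blast
  next
    case True
    then obtain e0 where e0: "e0 \<in> E" "e0 n \<noteq> 0" by blast
    define E' where "E' = (\<lambda>e. \<lambda>i. e i - (e n / e0 n) * e0 i) ` (E - {e0})"
    have fin': "finite E'" using Suc.prems unfolding E'_def by simp
    have "card E' \<le> card (E - {e0})" unfolding E'_def by (rule card_image_le) (use Suc.prems in simp)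
    also have "\<dots> = card E - 1" using e0 Suc.prems by simp
    finally have c1: "card E' \<le> card E - 1" .
    have "card E > 0" using Suc.prems e0 card_gt_0_iff by blast
    hence "card E' < n" using c1 Suc.prems(2) by linarith
    from Suc.IH[OF fin' this] obtain a' where a': "\<exists>i<n. a' i \<noteq> 0" "\<forall>e\<in>E'. (\<Sum>i<n. e i * a' i) = 0" by blast
    define S0 where "S0 = (\<Sum>i<n. e0 i * a' i)"
    define a where "a = a'(n := - S0 / e0 n)"
    have nz: "\<exists>i<Suc n. a i \<noteq> 0" using a'(1) unfolding a_def by (metis fun_upd_other less_SucI nat_neq_iff)
    have sumeq: "(\<Sum>i<Suc n. e i * a i) = (\<Sum>i<n. e i * a' i) + e n * (- S0 / e0 n)" for e
      by (simp add: a_def)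
    have "\<forall>e\<in>E. (\<Sum>i<Suc n. e i * a i) = 0"
    proof
      fix e assume e: "e \<in> E"
      show "(\<Sum>i<Suc n. e i * a i) = 0"
      proof (cases "e = e0")
        case True
        then show ?thesis using e0(2) unfolding sumeq S0_def by simp
      next
        case False
        define k where "k = e n / e0 n"
        have "(\<lambda>i. e i - k * e0 i) \<in> E'" unfolding E'_def k_def using e False by blast
        hence "(\<Sum>i<n. (e i - k * e0 i) * a' i) = 0" using bspec[OF a'(2)] by simp
        hence "(\<Sum>i<n. e i * a' i) = k * S0"
          unfolding S0_def by (simp add: algebra_simps sum_subtractf sum_distrib_left)
        thus ?thesis unfolding sumeq k_def using e0(2) by (simp add: field_simps)
      qed
    qed
    with nz show ?thesis by blast
  qed
qed

lemma term_re: "Re ((a * l) * cnj a * cinner v (v::'a::complex_inner)) = Re l * ((cmod a)^2 * (norm v)^2)"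
proof -
  have aa: "a * cnj a = complex_of_real ((cmod a)^2)" by (metis complex_norm_square)
  have "(a * l) * cnj a * cinner v v = l * (a * cnj a) * cinner v v" by (simp add: ac_simps)
  also have "\<dots> = l * complex_of_real ((cmod a)^2 * (norm v)^2)"
    unfolding aa cinner_self of_real_mult by (simp only: mult.assoc)
  finally have "Re ((a * l) * cnj a * cinner v v) = Re (l * complex_of_real ((cmod a)^2 * (norm v)^2))"
    by (rule arg_cong)
  also have "\<dots> = Re l * ((cmod a)^2 * (norm v)^2)" by simp
  finally show ?thesis .
qed

theorem theorem3p6:
  fixes F :: "'h::chilbert_space \<Rightarrow> 'h"
    and G :: "'x::chilbert_space \<Rightarrow> 'h"
    and M M0 C Ms :: "('x \<Rightarrow> complex) \<Rightarrow> 'x"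
  assumes F_lin: "clinear F"
    and F_compact: "compact_op F"
    and F_normal: "normal_op F"
    and G_bdd: "bounded_clinear G"
    and M_lin: "clinear_on_dual M"
    and M_bdd: "bounded_on_dual M"
    and Ms_adj: "is_dual_adjoint Ms M"
    and F_fact: "\<And>g. F g = G (Ms (dual_adj G g))"
    and null_fin: "finite_dim_subspace {g. dual_adj G g = (\<lambda>_. 0)}"
    and M_split: "\<forall>f\<in>dual_space. M f = M0 f + C f"
    and C_compact: "compact_on_dual C"
    and M0_sa: "selfadjoint_on_dual M0"
    and M0_coercive: "\<exists>c0>0. \<forall>\<phi>\<in>range (dual_adj G). Re (\<phi> (M0 \<phi>)) \<ge> c0 * (dual_norm \<phi>)\<^sup>2"
  shows "finite {l. eigenvalue F l \<and> Re l < 0}"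
proof (rule ccontr)
  assume inf: "infinite {l. eigenvalue F l \<and> Re l < 0}"
  obtain c0 where c0: "c0 > 0" and coer: "\<forall>\<phi>\<in>range (dual_adj G). Re (\<phi> (M0 \<phi>)) \<ge> c0 * (dual_norm \<phi>)\<^sup>2"
    using M0_coercive by blast
  have Clin: "clinear_on_dual C" using C_compact unfolding compact_on_dual_def by blast
  define S :: "('x \<Rightarrow> complex) set" where "S = {\<psi> \<in> dual_space. dual_norm \<psi> \<le> 1}"
  have cpt: "\<forall>S\<subseteq>dual_space. (\<exists>B. \<forall>f\<in>S. dual_norm f \<le> B) \<longrightarrow> compact (closure (C ` S))"
    using C_compact unfolding compact_on_dual_def by blast
  have S1: "S \<subseteq> dual_space" and S2: "\<forall>f\<in>S. dual_norm f \<le> 1" unfolding S_def by auto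
  have "compact (closure (C ` S))" using cpt S1 S2 by blast
  then obtain Y where Y: "Y \<subseteq> closure (C ` S)" "finite Y" "closure (C ` S) \<subseteq> (\<Union>y\<in>Y. ball y c0)"
  proof (rule compactE_image[where C = "closure (C ` S)" and f = "\<lambda>y. ball y c0"])
    show "closure (C ` S) \<subseteq> (\<Union>y\<in>closure (C ` S). ball y c0)"
    proof
      fix z assume "z \<in> closure (C ` S)"
      moreover have "z \<in> ball z c0" using c0 by simp
      ultimately show "z \<in> (\<Union>y\<in>closure (C ` S). ball y c0)" by blast
    qed
  qed auto
  have small: "norm (C \<psi>) < c0" if "\<psi> \<in> S" "\<forall>y\<in>Y. cinner (C \<psi>) y = 0" for \<psi>
  proof -
    have "C \<psi> \<in> C ` S" using that(1) by (rule imageI)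
    hence "C \<psi> \<in> closure (C ` S)" by (rule subsetD[OF closure_subset])
    hence "C \<psi> \<in> (\<Union>y\<in>Y. ball y c0)" using Y(3) by (rule subsetD[rotated])
    then obtain y where y0: "y \<in> Y" "C \<psi> \<in> ball y c0" by (rule UN_E)
    hence y: "y \<in> Y" "dist y (C \<psi>) < c0" by (simp_all only: mem_ball)
    have "cinner (C \<psi>) (- y) = 0" using that(2) y(1) by (simp add: cinner_minus_right)
    hence "(norm (C \<psi> + - y))^2 = (norm (C \<psi>))^2 + (norm (- y))^2" by (rule pythag)
    hence "(norm (C \<psi>))^2 \<le> (norm (C \<psi> - y))^2" by simp
    hence "norm (C \<psi>) \<le> norm (C \<psi> - y)" by (rule power2_le_imp_le) simp
    also have "\<dots> < c0" using y(2) by (simp add: dist_norm norm_minus_commute)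
    finally show ?thesis .
  qed
  have key: "Re (cinner (F g) g) \<ge> 0" if gY: "\<forall>y\<in>Y. cinner (C (dual_adj G g)) y = 0" for g
  proof -
    define \<psi> where "\<psi> = dual_adj G g"
    have psi: "\<psi> \<in> dual_space" unfolding \<psi>_def by (rule dual_adj_in[OF G_bdd])
    have e1: "cinner (F g) g = cnj (cinner g (G (Ms \<psi>)))" unfolding F_fact \<psi>_def by (rule cinner_commute)
    have e2: "cinner g (G (Ms \<psi>)) = \<psi> (Ms \<psi>)" unfolding \<psi>_def dual_adj_def ..
    have e3: "\<psi> (Ms \<psi>) = cnj (\<psi> (M \<psi>))" using Ms_adj psi unfolding is_dual_adjoint_def by (meson bspec)
    have Fgg: "cinner (F g) g = \<psi> (M \<psi>)" using e1 e2 e3 by simp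
    have Mpsi: "M \<psi> = M0 \<psi> + C \<psi>" using M_split psi by blast
    have padd: "\<forall>x y. \<psi> (x + y) = \<psi> x + \<psi> y" using psi unfolding dual_space_def by blast
    have "\<psi> (M \<psi>) = \<psi> (M0 \<psi>) + \<psi> (C \<psi>)"
      unfolding Mpsi using padd by simp
    hence ReF: "Re (cinner (F g) g) = Re (\<psi> (M0 \<psi>)) + Re (\<psi> (C \<psi>))" using Fgg by simp
    have c1: "Re (\<psi> (M0 \<psi>)) \<ge> c0 * (dual_norm \<psi>)^2" using bspec[OF coer rangeI] unfolding \<psi>_def .
    have "- Re (\<psi> (C \<psi>)) \<le> cmod (\<psi> (C \<psi>))" using abs_Re_le_cmod[of "\<psi> (C \<psi>)"] by linarith
    also have "\<dots> \<le> dual_norm \<psi> * norm (C \<psi>)" by (rule dual_bound[OF psi])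
    also have "\<dots> \<le> c0 * (dual_norm \<psi>)^2"
    proof (cases "dual_norm \<psi> = 0")
      case True then show ?thesis by simp
    next
      case False
      hence dpos: "dual_norm \<psi> > 0" using dual_norm_ge0[OF psi] by simp
      define r where "r = 1 / dual_norm \<psi>"
      have rpos: "r > 0" using dpos unfolding r_def by simp
      define \<psi>' where "\<psi>' = (\<lambda>x. complex_of_real r * \<psi> x)"
      have psi': "\<psi>' \<in> dual_space" unfolding \<psi>'_def by (rule dual_scale[OF psi])
      have "dual_norm \<psi>' \<le> 1"
      proof (rule dual_norm_le[OF psi'])
        fix x :: 'x assume x: "norm x \<le> 1"
        have "cmod (\<psi>' x) = r * cmod (\<psi> x)" unfolding \<psi>'_def using rpos by (simp add: norm_mult)
        also have "\<dots> \<le> r * (dual_norm \<psi> * norm x)" using dual_bound[OF psi] rpos by (simp add: mult_left_mono)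
        also have "\<dots> = norm x" unfolding r_def using dpos by simp
        finally show "cmod (\<psi>' x) \<le> 1" using x by simp
      qed
      hence inS: "\<psi>' \<in> S" unfolding S_def using psi' by blast
      have Cpsi': "C \<psi>' = scaleC (complex_of_real r) (C \<psi>)"
      proof -
        have "\<forall>f\<in>dual_space. \<forall>c. C (\<lambda>x. c * f x) = scaleC c (C f)"
          using Clin unfolding clinear_on_dual_def by blast
        thus ?thesis unfolding \<psi>'_def using psi by blast
      qed
      have "\<forall>y\<in>Y. cinner (C \<psi>') y = 0"
        using gY unfolding Cpsi' \<psi>_def by (simp add: cinner_scaleC_left)
      hence "norm (C \<psi>') < c0" using small inS by blast
      hence "r * norm (C \<psi>) < c0" unfolding Cpsi' scaleC_real using rpos by simp
      hence "norm (C \<psi>) < c0 * dual_norm \<psi>" unfolding r_def using dpos by (simp add: field_simps)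
      hence "dual_norm \<psi> * norm (C \<psi>) \<le> dual_norm \<psi> * (c0 * dual_norm \<psi>)"
        using dpos by (simp add: mult_left_mono)
      thus ?thesis by (simp add: power2_eq_square algebra_simps)
    qed
    finally have X: "- Re (\<psi> (C \<psi>)) \<le> c0 * (dual_norm \<psi>)^2" .
    show ?thesis using ReF c1 X by linarith
  qed
  obtain Fa where adj: "\<forall>x y. cinner (F x) y = cinner x (Fa y)" and comm: "F \<circ> Fa = Fa \<circ> F"
    using F_normal unfolding normal_op_def by blast
  define n where "n = card Y"
  define N where "N = Suc n"
  obtain L0 where L0: "finite L0" "card L0 = N" "L0 \<subseteq> {l. eigenvalue F l \<and> Re l < 0}"
    using infinite_arbitrarily_large[OF inf] by blast
  obtain h where h: "bij_betw h {0..<N} L0" using ex_bij_betw_nat_finite[OF L0(1)] L0(2) by auto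
  have hN: "eigenvalue F (h i) \<and> Re (h i) < 0" if "i < N" for i
  proof -
    have "h i \<in> L0" using h that unfolding bij_betw_def by auto
    thus ?thesis using L0(3) by blast
  qed
  have hinj: "h i \<noteq> h j" if "i < N" "j < N" "i \<noteq> j" for i j
  proof -
    have "inj_on h {0..<N}" using h unfolding bij_betw_def by blast
    thus ?thesis using that unfolding inj_on_def by auto
  qed
  define v where "v = (\<lambda>i. SOME v. v \<noteq> 0 \<and> F v = scaleC (h i) v)"
  have v: "v i \<noteq> 0 \<and> F (v i) = scaleC (h i) (v i)" if "i < N" for i
  proof -
    have "\<exists>v. v \<noteq> 0 \<and> F v = scaleC (h i) v" using hN[OF that] unfolding eigenvalue_def by blast
    thus ?thesis unfolding v_def by (rule someI_ex)
  qed
  have orth: "\<forall>i\<in>{..<N}. \<forall>j\<in>{..<N}. i \<noteq> j \<longrightarrow> cinner (v i) (v j) = 0"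
  proof (intro ballI impI)
    fix i j assume "i \<in> {..<N}" "j \<in> {..<N}" "i \<noteq> j"
    hence ij: "i < N" "j < N" "i \<noteq> j" by auto
    show "cinner (v i) (v j) = 0"
      using normal_orth[OF adj comm conjunct2[OF v[OF ij(1)]] conjunct2[OF v[OF ij(2)]] hinj[OF ij]] .
  qed
  define E where "E = (\<lambda>y. \<lambda>i. cinner (C (dual_adj G (v i))) y) ` Y"
  have "card E \<le> card Y" unfolding E_def by (rule card_image_le[OF Y(2)])
  hence "card E < N" unfolding N_def n_def by simp
  moreover have "finite E" unfolding E_def using Y(2) by simp
  ultimately obtain a where a: "\<exists>i<N. a i \<noteq> 0" "\<forall>e\<in>E. (\<Sum>i<N. e i * a i) = 0"
    using homog_system[of E N] by blast
  define g where "g = (\<Sum>i<N. scaleC (a i) (v i))"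
  have Cadd: "C (\<lambda>x. f x + f' x) = C f + C f'" if "f\<in>dual_space" "f'\<in>dual_space" for f f'
  proof -
    have "\<forall>f\<in>dual_space. \<forall>g\<in>dual_space. C (\<lambda>x. f x + g x) = C f + C g"
      using Clin unfolding clinear_on_dual_def by blast
    thus ?thesis using that by blast
  qed
  have Cscale: "C (\<lambda>x. c * f x) = scaleC c (C f)" if "f\<in>dual_space" for f c
  proof -
    have "\<forall>f\<in>dual_space. \<forall>c. C (\<lambda>x. c * f x) = scaleC c (C f)"
      using Clin unfolding clinear_on_dual_def by blast
    thus ?thesis using that by blast
  qed
  have "\<forall>y\<in>Y. cinner (C (dual_adj G g)) y = 0"
  proof
    fix y assume y: "y \<in> Y"
    define \<Phi> where "\<Phi> = (\<lambda>g. cinner (C (dual_adj G g)) y)"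
    have \<Phi>add: "\<Phi> (x + x') = \<Phi> x + \<Phi> x'" for x x'
      unfolding \<Phi>_def dual_adj_add Cadd[OF dual_adj_in[OF G_bdd] dual_adj_in[OF G_bdd]] by (rule cinner_add_left)
    have \<Phi>hom: "\<Phi> (scaleC c x) = c * \<Phi> x" for c x
      unfolding \<Phi>_def dual_adj_scale Cscale[OF dual_adj_in[OF G_bdd]] by (rule cinner_scaleC_left)
    have "\<Phi> g = (\<Sum>i<N. a i * \<Phi> (v i))" unfolding g_def by (rule lin_sum_c[OF \<Phi>add \<Phi>hom])
    also have "\<dots> = (\<Sum>i<N. (\<lambda>i. cinner (C (dual_adj G (v i))) y) i * a i)"
      unfolding \<Phi>_def by (simp add: mult.commute)
    also have "\<dots> = 0"
    proof -
      have "(\<lambda>i. cinner (C (dual_adj G (v i))) y) \<in> E" unfolding E_def by (rule image_eqI[OF refl y])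
      from bspec[OF a(2) this] show ?thesis by simp
    qed
    finally show "cinner (C (dual_adj G g)) y = 0" unfolding \<Phi>_def .
  qed
  hence nn: "Re (cinner (F g) g) \<ge> 0" by (rule key)
  have Fg: "F g = (\<Sum>i<N. scaleC (a i * h i) (v i))"
  proof -
    have "F g = (\<Sum>i<N. scaleC (a i) (F (v i)))" unfolding g_def
      by (rule lin_sum[OF clinearD(1)[OF F_lin] clinearD(2)[OF F_lin]])
    also have "\<dots> = (\<Sum>i<N. scaleC (a i * h i) (v i))"
      using v by (intro sum.cong refl) (simp add: scaleC_scaleC)
    finally show ?thesis .
  qed
  have "cinner (F g) g = (\<Sum>i<N. (a i * h i) * cnj (a i) * cinner (v i) (v i))"
    unfolding Fg unfolding g_def by (rule cinner_orth_sum[OF orth]) simp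
  hence ReFg: "Re (cinner (F g) g) = (\<Sum>i<N. Re (h i) * ((cmod (a i))^2 * (norm (v i))^2))"
    by (simp only: Re_sum term_re)
  obtain i0 where i0: "i0 < N" "a i0 \<noteq> 0" using a(1) by blast
  have tneg: "Re (h i0) * ((cmod (a i0))^2 * (norm (v i0))^2) < 0"
    using hN[OF i0(1)] v[OF i0(1)] i0(2) by (simp add: mult_neg_pos)
  have tle: "Re (h i) * ((cmod (a i))^2 * (norm (v i))^2) \<le> 0" if "i \<in> {..<N} - {i0}" for i
    using hN[of i] that by (simp add: mult_nonpos_nonneg)
  have "(\<Sum>i<N. Re (h i) * ((cmod (a i))^2 * (norm (v i))^2))
      = Re (h i0) * ((cmod (a i0))^2 * (norm (v i0))^2) + (\<Sum>i\<in>{..<N} - {i0}. Re (h i) * ((cmod (a i))^2 * (norm (v i))^2))"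
    using i0(1) by (simp add: sum.remove)
  also have "\<dots> < 0"
  proof -
    have "(\<Sum>i\<in>{..<N} - {i0}. Re (h i) * ((cmod (a i))^2 * (norm (v i))^2)) \<le> 0"
      by (rule sum_nonpos) (rule tle)
    thus ?thesis using tneg by linarith
  qed
  finally show False using nn ReFg by linarith
qed

end
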